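(* Let $\Sigma:\ \dot x=-(A-M)x+d$ be $\gamma$-robust for some $\gamma>0$, let $u=(A-M)^{-1}\mathbb{1}$, and let $k$ be any index with $u_k=\max_l u_l$. Let $i\neq j$ with $(M)_{ij}=0$ and $m_{ij}>0$, and consider adding the edge $(i,j)$, i.e., replacing $M$ by $M+m_{ij}e_ie_j^{\mathrm T}$. If there exists a directed path in $\mathcal{G}(MA^{-1})$ from node $i$ to node $k$, then this change is not scalable.
   Context: $A=\mathrm{diag}(a_1,\dots,a_N)$ with all $a_i>0$, $M\in\mathbb{R}^{N\times N}$ has zero diagonal and nonnegative off-diagonal entries $m_{pq}$. For $\gamma>0$, a system $\dot x=-(A-M)x+d$ is $\gamma$-robust if $-(A-M)$ is Hurwitz and for every bounded disturbance $d$, the solution with $x(0)=0$ satisfies $\max_{p}|x_p(t)|\le\gamma\max_p\sup_{s\ge0}|d_p(s)|$ for all $t\ge0$. A structural change $\Sigma\mapsto\bar\Sigma$ is scalable if, for every $\gamma>0$ for which $\Sigma$ is $\gamma$-robust, $\bar\Sigma$ is $\gamma$-robust. The graph $\mathcal{G}(MA^{-1})$ has vertices $\{1,\dots,N\}$ and an edge $(p,q)$ iff $m_{pq}>0$. A directed path from $i$ to $k$ is a sequence of pairwise distinct nodes $(i_0,\dots,i_r)$, $r\ge0$, with $i_0=i$, $i_r=k$ and $m_{i_{l+1}i_l}>0$ for all $l$ (the case $r=0$, $i=k$, being the trivial path). *)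

theory Defs
  imports "HOL-Analysis.Analysis"
begin

definition diagm :: "real ^ 'n \<Rightarrow> real ^ 'n ^ 'n" where
  "diagm a = (\<chi> p q. if p = q then a $ p else 0)"

definition hurwitz :: "real ^ 'n ^ 'n \<Rightarrow> bool" where
  "hurwitz B \<longleftrightarrow>
     (\<forall>(c::complex) (v::complex ^ 'n). v \<noteq> 0 \<and>
        (\<chi> p q. complex_of_real (B $ p $ q)) *v v = c *s v \<longrightarrow> Re c < 0)"

definition robust :: "real ^ 'n \<Rightarrow> real ^ 'n ^ 'n \<Rightarrow> real \<Rightarrow> bool" where
  "robust a M \<gamma> \<longleftrightarrow>
     hurwitz (- (diagm a - M)) \<and>
     (\<forall>(d :: real \<Rightarrow> real ^ 'n) (x :: real \<Rightarrow> real ^ 'n).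
        continuous_on {0..} d \<and> bounded (d ` {0..}) \<and> x 0 = 0 \<and>
        (\<forall>t\<ge>0. (x has_vector_derivative ((- (diagm a - M)) *v x t + d t)) (at t within {0..}))
        \<longrightarrow> (\<forall>t\<ge>0. \<forall>p. \<bar>x t $ p\<bar> \<le>
                \<gamma> * (SUP p'. SUP s\<in>{0::real..}. \<bar>d s $ p'\<bar>)))"

definition scalable :: "real ^ 'n \<Rightarrow> real ^ 'n ^ 'n \<Rightarrow> real ^ 'n \<Rightarrow> real ^ 'n ^ 'n \<Rightarrow> bool" where
  "scalable a M a' M' \<longleftrightarrow> (\<forall>\<gamma>>0. robust a M \<gamma> \<longrightarrow> robust a' M' \<gamma>)"

text \<open>Directed path from i to k in G(M A^{-1}): distinct nodes i_0..i_r with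
  m_{i_{l+1} i_l} > 0.\<close>
definition dpath :: "real ^ 'n ^ 'n \<Rightarrow> 'n \<Rightarrow> 'n \<Rightarrow> bool" where
  "dpath M i k \<longleftrightarrow> (\<exists>xs. xs \<noteq> [] \<and> distinct xs \<and> hd xs = i \<and> last xs = k \<and>
      (\<forall>l. Suc l < length xs \<longrightarrow> M $ (xs ! Suc l) $ (xs ! l) > 0))"

end

theory Submission imports Defs begin

definition nonneg :: "real ^ 'n \<Rightarrow> bool" where
  "nonneg v \<longleftrightarrow> (\<forall>p. 0 \<le> v $ p)"

lemma MP:
  fixes C :: "real ^ 'n ^ 'n" and v z :: "real ^ 'n"
  assumes Z: "\<forall>p q. p \<noteq> q \<longrightarrow> C $ p $ q \<le> 0"
    and v0: "\<forall>p. 0 \<le> v $ p"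
    and Cv: "\<forall>p. 0 < (C *v v) $ p"
    and Cz: "\<forall>p. 0 \<le> (C *v z) $ p"
  shows "0 \<le> z $ p"
proof -
  have vpos: "0 < v $ q" for q
  proof (rule ccontr)
    assume "\<not> 0 < v $ q"
    with v0 have vq: "v $ q = 0" by (meson antisym not_le)
    have "(C *v v) $ q = (\<Sum>r\<in>UNIV. C $ q $ r * v $ r)"
      by (simp add: matrix_vector_mult_def)
    also have "\<dots> \<le> 0"
    proof (rule sum_nonpos)
      fix r :: 'n
      show "C $ q $ r * v $ r \<le> 0"
      proof (cases "r = q")
        case True then show ?thesis using vq by simp
      next
        case False then show ?thesis using Z v0 by (simp add: mult_nonpos_nonneg)
      qed
    qed
    finally show False using Cv by (metis not_le)
  qed
  define \<mu> where "\<mu> = Min (range (\<lambda>q. z $ q / v $ q))"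
  have "\<mu> \<in> range (\<lambda>q. z $ q / v $ q)"
    unfolding \<mu>_def by (rule Min_in) auto
  then obtain p0 where p0: "z $ p0 / v $ p0 = \<mu>" by auto
  have mule: "\<mu> \<le> z $ q / v $ q" for q
    unfolding \<mu>_def by (simp add: Min_le)
  have "0 \<le> \<mu>"
  proof (rule ccontr)
    assume neg: "\<not> 0 \<le> \<mu>"
    have zp0: "z $ p0 = \<mu> * v $ p0" using p0 vpos[of p0] by (simp add: field_simps)
    have zq: "\<mu> * v $ q \<le> z $ q" for q using mule[of q] vpos[of q] by (simp add: field_simps)
    have "(C *v z) $ p0 = (\<Sum>r\<in>UNIV. C $ p0 $ r * z $ r)"
      by (simp add: matrix_vector_mult_def)
    also have "\<dots> \<le> (\<Sum>r\<in>UNIV. C $ p0 $ r * (\<mu> * v $ r))"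
    proof (rule sum_mono)
      fix r :: 'n
      show "C $ p0 $ r * z $ r \<le> C $ p0 $ r * (\<mu> * v $ r)"
      proof (cases "r = p0")
        case True then show ?thesis using zp0 by simp
      next
        case False then show ?thesis using Z zq[of r] by (simp add: mult_left_mono_neg)
      qed
    qed
    also have "\<dots> = \<mu> * (C *v v) $ p0"
      by (simp add: matrix_vector_mult_def sum_distrib_left algebra_simps)
    also have "\<dots> < 0" using neg Cv by (simp add: mult_neg_pos)
    finally show False using Cz by (metis not_le)
  qed
  then show ?thesis using order_trans[OF \<open>0 \<le> \<mu>\<close> mule[of p]] vpos[of p] by (simp add: zero_le_divide_iff)
qed

lemma det_continuous_on:
  fixes F :: "real \<Rightarrow> real ^ 'n ^ 'n"
  assumes "\<And>i j. continuous_on S (\<lambda>s. F s $ i $ j)"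
  shows "continuous_on S (\<lambda>s. det (F s))"
  unfolding det_def
  by (intro continuous_intros assms)

lemma matvec_mat_plus:
  fixes B :: "real ^ 'n ^ 'n"
  shows "((mat s + B) *v v) $ p = s * v $ p + (B *v v) $ p"
proof -
  have "((mat s + B) *v v) $ p = (\<Sum>q\<in>UNIV. (if p = q then s * v $ q else 0) + B $ p $ q * v $ q)"
    by (simp add: matrix_vector_mult_def mat_def distrib_right; rule sum.cong; simp)
  also have "\<dots> = s * v $ p + (B *v v) $ p"
    by (simp add: sum.distrib matrix_vector_mult_def)
  finally show ?thesis .
qed

lemma det_nz_of_ker:
  fixes A :: "real ^ 'n ^ 'n"
  assumes "\<forall>x. A *v x = 0 \<longrightarrow> x = 0"
  shows "det A \<noteq> 0"
proof -
  obtain B' where "B' ** A = mat 1" using assms matrix_left_invertible_ker by blast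
  then have "det B' * det A = 1" by (metis det_I det_mul)
  then show ?thesis by auto
qed

lemma hurwitz_det:
  fixes B :: "real ^ 'n ^ 'n"
  assumes H: "hurwitz (- B)" and s: "0 \<le> s"
  shows "det (mat s + B) \<noteq> 0"
proof (rule det_nz_of_ker, intro allI impI, rule ccontr)
  fix x :: "real ^ 'n"
  assume x: "(mat s + B) *v x = 0" and nz: "x \<noteq> 0"
  have Bx: "((- B) *v x) $ p = s * x $ p" for p
    using arg_cong[OF x, of "\<lambda>y. y $ p"] matvec_mat_plus[of s B x p]
    by (simp add: matrix_vector_mult_def sum_negf)
  define v where "v = (\<chi> p. complex_of_real (x $ p))"
  have vnz: "v \<noteq> 0"
  proof
    assume "v = 0"
    have "x $ p = 0" for p
    proof -
      have "v $ p = 0" using \<open>v = 0\<close> by simp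
      then show ?thesis by (simp add: v_def)
    qed
    then show False using nz by (simp add: vec_eq_iff)
  qed
  have "(\<chi> p q. complex_of_real ((- B) $ p $ q)) *v v = complex_of_real s *s v"
  proof -
    have "((\<chi> p q. complex_of_real ((- B) $ p $ q)) *v v) $ p = (complex_of_real s *s v) $ p" for p
    proof -
      have "((\<chi> p q. complex_of_real ((- B) $ p $ q)) *v v) $ p
            = complex_of_real (((- B) *v x) $ p)"
        by (simp add: matrix_vector_mult_def v_def)
      then show ?thesis using Bx[of p] by (simp add: v_def)
    qed
    then show ?thesis by (simp add: vec_eq_iff)
  qed
  then have "Re (complex_of_real s) < 0" using H vnz unfolding hurwitz_def by blast
  then show False using s by simp
qed

lemma invpos_cert:
  fixes B :: "real ^ 'n ^ 'n"
  assumes Z: "\<forall>p q. p \<noteq> q \<longrightarrow> B $ p $ q \<le> 0"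
    and nd: "\<forall>s\<ge>0. det (mat s + B) \<noteq> 0"
  shows "\<exists>v. (\<forall>p. 0 \<le> v $ p) \<and> B *v v = vec 1"
proof -
  define C where "C s = mat s + B" for s :: real
  define V where "V s = (\<chi> k. det (\<chi> i j. if j = k then (vec 1 :: real ^ 'n) $ i else C s $ i $ j) / det (C s))" for s
  have CV: "C s *v V s = vec 1" if "0 \<le> s" for s
    using cramer[of "C s" "V s" "vec 1"] nd that unfolding V_def C_def by simp
  have ZC: "\<forall>p q. p \<noteq> q \<longrightarrow> C s $ p $ q \<le> 0" for s
    using Z by (simp add: C_def mat_def)
  have CVcomp: "(C s *v v) $ p = s * v $ p + (B *v v) $ p" for s v p
    unfolding C_def by (rule matvec_mat_plus)
  have Vnn: "\<forall>p. 0 \<le> V s $ p" if s0: "0 \<le> s" and cert: "\<exists>v. (\<forall>p. 0 \<le> v $ p) \<and> (\<forall>p. 0 < (C s *v v) $ p)" for s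
  proof
    fix p
    from cert obtain v where "\<forall>p. 0 \<le> v $ p" "\<forall>p. 0 < (C s *v v) $ p" by blast
    then show "0 \<le> V s $ p" using MP[OF ZC[of s], of v "V s" p] CV[OF s0] by simp
  qed
  define S0 where "S0 = 1 + (\<Sum>p\<in>UNIV. \<Sum>q\<in>UNIV. \<bar>B $ p $ q\<bar>)"
  have rowb: "(\<Sum>q\<in>UNIV. \<bar>B $ p $ q\<bar>) \<le> S0 - 1" for p
    unfolding S0_def using member_le_sum[of p UNIV "\<lambda>p. \<Sum>q\<in>UNIV. \<bar>B $ p $ q\<bar>"] by (simp add: sum_nonneg)
  have S0pos: "0 \<le> S0" unfolding S0_def by (simp add: sum_nonneg add_nonneg_nonneg)
  have "\<forall>p. 0 \<le> V S0 $ p"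
  proof (rule Vnn[OF S0pos], rule exI[of _ "vec 1"], intro conjI allI)
    fix p
    show "0 \<le> (vec 1 :: real ^ 'n) $ p" by simp
    have "- (\<Sum>q\<in>UNIV. \<bar>B $ p $ q\<bar>) \<le> (\<Sum>q\<in>UNIV. B $ p $ q)"
      by (simp add: sum_negf[symmetric] sum_mono)
    then have "- (S0 - 1) \<le> (B *v vec 1) $ p"
      using rowb[of p] by (simp add: matrix_vector_mult_def)
    then show "0 < (C S0 *v vec 1) $ p" using CVcomp[of S0 "vec 1" p] by simp
  qed
  define T where "T = {s. 0 \<le> s \<and> (\<forall>p. 0 \<le> V s $ p)}"
  have S0T: "S0 \<in> T" using S0pos \<open>\<forall>p. 0 \<le> V S0 $ p\<close> by (simp add: T_def)
  have bT: "bdd_below T" unfolding T_def by (rule bdd_belowI[of _ 0]) auto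
  define s0 where "s0 = Inf T"
  have s0ge: "0 \<le> s0" unfolding s0_def using S0T by (intro cInf_greatest) (auto simp: T_def)
  have contC: "continuous_on {0..} (\<lambda>s. C s $ i $ j)" for i j
    by (cases "i = j") (simp_all add: C_def mat_def continuous_intros)
  have contV: "continuous_on {0..} (\<lambda>s. V s $ k)" for k
  proof -
    have n: "continuous_on {0..} (\<lambda>s. det (\<chi> i j. if j = k then (vec 1 :: real ^ 'n) $ i else C s $ i $ j))"
      by (rule det_continuous_on) (case_tac "j = k", simp_all add: contC)
    have d: "continuous_on {0..} (\<lambda>s. det (C s))"
      by (rule det_continuous_on) (rule contC)
    show ?thesis unfolding V_def
      using nd by (simp, intro continuous_on_divide n d) (auto simp: C_def)
  qed
  have s0T: "s0 \<in> T"
  proof (rule ccontr)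
    assume "s0 \<notin> T"
    then obtain p where neg: "V s0 $ p < 0" using s0ge by (auto simp: T_def not_le)
    have "continuous (at s0 within {0..}) (\<lambda>s. V s $ p)"
      using contV[of p] s0ge continuous_on_eq_continuous_within by auto
    then obtain \<delta> where \<delta>: "\<delta> > 0" "\<forall>s\<in>{0..}. dist s s0 < \<delta> \<longrightarrow> dist (V s $ p) (V s0 $ p) < - V s0 $ p"
      using neg unfolding continuous_within_eps_delta by (metis neg_0_less_iff_less)
    have "\<exists>s\<in>T. s < s0 + \<delta>" unfolding s0_def using S0T \<delta>(1)
      by (intro cInf_lessD) auto
    then obtain s where sT: "s \<in> T" "s < s0 + \<delta>" by blast
    have "s0 \<le> s" unfolding s0_def using sT bT by (simp add: cInf_lower)
    then have "dist s s0 < \<delta>" using sT by (simp add: dist_real_def)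
    then have "dist (V s $ p) (V s0 $ p) < - V s0 $ p" using \<delta> sT by (auto simp: T_def)
    moreover have "0 \<le> V s $ p" using sT by (auto simp: T_def)
    ultimately show False by (simp add: dist_real_def abs_if split: if_splits)
  qed
  have "s0 = 0"
  proof (rule ccontr)
    assume "s0 \<noteq> 0"
    then have s0p: "0 < s0" using s0ge by simp
    define v where "v = V s0"
    have vnn: "\<forall>p. 0 \<le> v $ p" using s0T by (simp add: T_def v_def)
    define m where "m = 1 + (\<Sum>p\<in>UNIV. v $ p)"
    have vm: "v $ p \<le> m - 1" for p unfolding m_def using vnn by (simp add: member_le_sum)
    have mpos: "1 \<le> m" unfolding m_def using vnn by (simp add: sum_nonneg)
    define s' where "s' = max 0 (s0 - 1 / (2 * m))"
    have s'ge: "0 \<le> s'" by (simp add: s'_def)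
    have s'lt: "s' < s0" using s0p mpos by (simp add: s'_def)
    have diff: "s0 - s' \<le> 1 / (2 * m)" by (simp add: s'_def)
    have Cv: "(C s0 *v v) $ p = 1" for p using CV[OF s0ge] by (simp add: v_def)
    have "\<forall>p. 0 \<le> V s' $ p"
    proof (rule Vnn[OF s'ge], rule exI[of _ v], intro conjI allI)
      fix p
      show "0 \<le> v $ p" using vnn by simp
      have "(s0 - s') * v $ p \<le> (1 / (2 * m)) * m"
        using diff vm[of p] vnn s'lt mpos by (intro mult_mono) auto
      also have "\<dots> = 1/2" using mpos by simp
      finally have "(s0 - s') * v $ p < 1" by simp
      moreover have "(C s' *v v) $ p = 1 - (s0 - s') * v $ p"
        using CVcomp[of s' v p] CVcomp[of s0 v p] Cv[of p] by (simp add: algebra_simps)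
      ultimately show "0 < (C s' *v v) $ p" by simp
    qed
    then have "s' \<in> T" using s'ge by (simp add: T_def)
    then have "s0 \<le> s'" unfolding s0_def using bT by (simp add: cInf_lower)
    then show False using s'lt by simp
  qed
  then have "0 \<in> T" using s0T by simp
  moreover have "C 0 = B" by (simp add: C_def mat_def vec_eq_iff)
  ultimately show ?thesis using CV[of 0] by (auto simp: T_def)
qed

lemma invpos:
  fixes B :: "real ^ 'n ^ 'n"
  assumes Z: "\<forall>p q. p \<noteq> q \<longrightarrow> B $ p $ q \<le> 0"
    and nd: "\<forall>s\<ge>0. det (mat s + B) \<noteq> 0"
    and Bz: "\<forall>p. 0 \<le> (B *v z) $ p"
  shows "0 \<le> z $ p"
proof -
  obtain v where v: "\<forall>p. 0 \<le> v $ p" "B *v v = vec 1" using invpos_cert[OF Z nd] by blast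
  show ?thesis using MP[OF Z v(1), of z p] v(2) Bz by simp
qed

lemma comparison:
  fixes G :: "real ^ 'n ^ 'n" and w f :: "real \<Rightarrow> real ^ 'n"
  assumes Gm: "\<forall>p q. p \<noteq> q \<longrightarrow> 0 \<le> G $ p $ q"
    and der: "\<forall>t\<ge>0. (w has_vector_derivative (G *v w t + f t)) (at t within {0..})"
    and fpos: "\<forall>t\<ge>0. \<forall>p. 0 \<le> f t $ p"
    and w0: "\<forall>p. 0 \<le> w 0 $ p"
  shows "\<forall>t\<ge>0. \<forall>p. 0 \<le> w t $ p"
proof -
  define L where "L = 1 + (\<Sum>p\<in>UNIV. \<Sum>q\<in>UNIV. \<bar>G $ p $ q\<bar>)"
  have rowL: "(\<Sum>q\<in>UNIV. G $ p $ q) \<le> L - 1" for p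
  proof -
    have "(\<Sum>q\<in>UNIV. G $ p $ q) \<le> (\<Sum>q\<in>UNIV. \<bar>G $ p $ q\<bar>)" by (rule sum_mono) simp
    also have "\<dots> \<le> L - 1"
      unfolding L_def using member_le_sum[of p UNIV "\<lambda>p. \<Sum>q\<in>UNIV. \<bar>G $ p $ q\<bar>"] by (simp add: sum_nonneg)
    finally show ?thesis .
  qed
  have key: "\<forall>t\<ge>0. \<forall>p. 0 < w t $ p + \<epsilon> * exp (L * t)" if eps: "0 < \<epsilon>" for \<epsilon>
  proof (rule ccontr)
    define h where "h q t = w t $ q + \<epsilon> * exp (L * t)" for q t
    assume "\<not> (\<forall>t\<ge>0. \<forall>p. 0 < w t $ p + \<epsilon> * exp (L * t))"
    then obtain t1 p1 where t1: "0 \<le> t1" "h p1 t1 \<le> 0" by (auto simp: h_def not_less)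
    have dh: "((h q) has_real_derivative ((G *v w t + f t) $ q + \<epsilon> * (exp (L * t) * L))) (at t within {0..})"
      if "0 \<le> t" for q t
    proof -
      have "((\<lambda>t. w t $ q) has_vector_derivative (G *v w t + f t) $ q) (at t within {0..})"
        using bounded_linear.has_vector_derivative[OF bounded_linear_vec_nth] der that by blast
      then have a: "((\<lambda>t. w t $ q) has_real_derivative (G *v w t + f t) $ q) (at t within {0..})"
        by (simp add: has_real_derivative_iff_has_vector_derivative)
      have b: "((\<lambda>t. \<epsilon> * exp (L * t)) has_real_derivative \<epsilon> * (exp (L * t) * L)) (at t within {0..})"
        by (auto intro!: derivative_eq_intros)
      show ?thesis unfolding h_def using DERIV_add[OF a b] by simp
    qed
    have conth: "continuous_on {0..} (h q)" for q
      using dh DERIV_continuous continuous_on_eq_continuous_within by (metis atLeast_iff)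
    define S where "S = (\<Union>q. {0..t1} \<inter> h q -` {..0})"
    have clS: "closed S" unfolding S_def
      using continuous_closed_preimage[OF continuous_on_subset[OF conth]] by (intro closed_UN) auto
    have t1S: "t1 \<in> S" using t1 by (auto simp: S_def)
    have bS: "bdd_below S" unfolding S_def by (rule bdd_belowI[of _ 0]) auto
    define ts where "ts = Inf S"
    have tsS: "ts \<in> S" unfolding ts_def using closed_contains_Inf[OF _ bS clS] t1S by auto
    then obtain p where hp: "h p ts \<le> 0" and ts0: "0 \<le> ts" and tst1: "ts \<le> t1" by (auto simp: S_def)
    have before: "0 < h q t" if "0 \<le> t" "t < ts" for q t
    proof (rule ccontr)
      assume "\<not> 0 < h q t"
      then have "t \<in> S" using that tst1 by (auto simp: S_def not_less)
      then have "ts \<le> t" unfolding ts_def using bS by (simp add: cInf_lower)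
      then show False using that by simp
    qed
    have tspos: "0 < ts"
    proof (rule ccontr)
      assume "\<not> 0 < ts"
      then have "ts = 0" using ts0 by simp
      then have "h p 0 \<le> 0" using hp by simp
      moreover have "0 < h p 0" using w0 eps by (simp add: h_def add_nonneg_pos)
      ultimately show False by simp
    qed
    have atts: "0 \<le> h q ts" for q
    proof (rule ccontr)
      assume "\<not> 0 \<le> h q ts"
      then have neg: "h q ts < 0" by simp
      have "continuous (at ts within {0..}) (h q)"
        using conth[of q] ts0 continuous_on_eq_continuous_within by auto
      then obtain \<delta> where \<delta>: "\<delta> > 0" "\<forall>t\<in>{0..}. dist t ts < \<delta> \<longrightarrow> dist (h q t) (h q ts) < - h q ts"
        using neg unfolding continuous_within_eps_delta by (metis neg_0_less_iff_less)
      define t where "t = max 0 (ts - \<delta>/2)"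
      have "0 \<le> t" "t < ts" "dist t ts < \<delta>" using \<delta>(1) tspos by (auto simp: t_def dist_real_def)
      then have "dist (h q t) (h q ts) < - h q ts" "0 < h q t" using \<delta> before by auto
      then show False by (simp add: dist_real_def abs_if split: if_splits)
    qed
    have hp0: "h p ts = 0" using hp atts[of p] by simp
    define e where "e = exp (L * ts)"
    have epos: "0 < e" by (simp add: e_def)
    have wq: "w ts $ q = h q ts - \<epsilon> * e" for q by (simp add: h_def e_def)
    have "(G *v w ts) $ p = (\<Sum>q\<in>UNIV. G $ p $ q * h q ts) - \<epsilon> * e * (\<Sum>q\<in>UNIV. G $ p $ q)"
      by (simp add: matrix_vector_mult_def wq algebra_simps sum_subtractf sum_distrib_left)
    moreover have "0 \<le> (\<Sum>q\<in>UNIV. G $ p $ q * h q ts)"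
    proof (rule sum_nonneg)
      fix q show "0 \<le> G $ p $ q * h q ts"
        by (cases "q = p") (simp_all add: hp0 Gm atts)
    qed
    moreover have "\<epsilon> * e * (\<Sum>q\<in>UNIV. G $ p $ q) \<le> \<epsilon> * e * (L - 1)"
      using rowL[of p] eps epos by (simp add: mult_left_mono)
    moreover have "0 \<le> f ts $ p" using fpos ts0 by simp
    ultimately have Dpos: "0 < (G *v w ts + f ts) $ p + \<epsilon> * (exp (L * ts) * L)"
      using mult_pos_pos[OF eps epos] unfolding e_def[symmetric] by (simp add: algebra_simps)
    obtain d where d: "d > 0" "\<forall>hh>0. ts - hh \<in> {0..} \<longrightarrow> hh < d \<longrightarrow> h p (ts - hh) < h p ts"
      using has_real_derivative_pos_inc_left[OF dh[OF ts0] Dpos] by blast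
    define hh where "hh = min (d/2) ts"
    have "hh > 0" "ts - hh \<in> {0..}" "hh < d" using d tspos by (auto simp: hh_def)
    then have "h p (ts - hh) < 0" using d hp0 by auto
    moreover have "0 < h p (ts - hh)" using before \<open>hh > 0\<close> \<open>ts - hh \<in> {0..}\<close> by auto
    ultimately show False by simp
  qed
  show ?thesis
  proof (intro allI impI)
    fix t :: real and p
    assume t: "0 \<le> t"
    show "0 \<le> w t $ p"
    proof (rule ccontr)
      assume "\<not> 0 \<le> w t $ p"
      then have neg: "w t $ p < 0" by simp
      define \<epsilon> where "\<epsilon> = - w t $ p / (2 * exp (L * t))"
      have "0 < \<epsilon>" using neg by (simp add: \<epsilon>_def divide_neg_pos)
      then have "0 < w t $ p + \<epsilon> * exp (L * t)" using key t by blast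
      moreover have "\<epsilon> * exp (L * t) = - w t $ p / 2" by (simp add: \<epsilon>_def)
      ultimately show False using neg by simp
    qed
  qed
qed

lemma diag_mv: "(diagm a *v v) $ p = a $ p * v $ p"
proof -
  have e: "\<And>j. (if p = j then a $ p else 0) * v $ j = (if p = j then a $ p * v $ p else 0)" by simp
  show ?thesis unfolding diagm_def matrix_vector_mult_def by (simp add: e)
qed

lemma inv_right:
  fixes A :: "real ^ 'n ^ 'n"
  assumes "invertible A"
  shows "A *v (matrix_inv A *v v) = v"
proof -
  have "A ** matrix_inv A = mat 1"
    using assms unfolding invertible_def matrix_inv_def by (metis (mono_tags, lifting) someI_ex)
  then show ?thesis by (simp add: matrix_vector_mul_assoc)
qed

lemma nonneg_mv:
  fixes N :: "real ^ 'n ^ 'n"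
  assumes "\<forall>p q. 0 \<le> N $ p $ q" "\<forall>q. 0 \<le> z $ q"
  shows "N $ p $ r * z $ r \<le> (N *v z) $ p"
  unfolding matrix_vector_mult_def
  using member_le_sum[of r UNIV "\<lambda>q. N $ p $ q * z $ q"] assms by simp

lemma SUP_bound:
  fixes d :: "real \<Rightarrow> real ^ 'n"
  assumes "bounded (d ` {0..})" "0 \<le> s"
  shows "\<bar>d s $ q\<bar> \<le> (SUP p'. SUP s\<in>{0::real..}. \<bar>d s $ p'\<bar>)"
proof -
  obtain K where K: "\<forall>y\<in>d ` {0..}. norm y \<le> K" using assms(1) bounded_iff by blast
  have bi: "bdd_above ((\<lambda>s. \<bar>d s $ p\<bar>) ` {0::real..})" for p
    by (rule bdd_aboveI[of _ K]) (use K component_le_norm_cart order_trans in blast)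
  have "\<bar>d s $ q\<bar> \<le> (SUP s\<in>{0::real..}. \<bar>d s $ q\<bar>)"
    using assms(2) bi by (intro cSUP_upper) auto
  also have "\<dots> \<le> (SUP p'. SUP s\<in>{0::real..}. \<bar>d s $ p'\<bar>)"
    by (intro cSUP_upper) (auto intro: bdd_above_finite)
  finally show ?thesis .
qed

theorem mainTheorem8:
  fixes a :: "real ^ 'n" and M :: "real ^ 'n ^ 'n" and \<gamma>0 mij :: real and i j k :: 'n
  assumes apos: "\<forall>p. a $ p > 0"
    and Mdiag: "\<forall>p. M $ p $ p = 0"
    and Mnonneg: "\<forall>p q. M $ p $ q \<ge> 0"
    and gpos: "\<gamma>0 > 0"
    and rob: "robust a M \<gamma>0"
    and kmax: "\<forall>l. (matrix_inv (diagm a - M) *v vec 1) $ l \<le> (matrix_inv (diagm a - M) *v vec 1) $ k"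
    and ij: "i \<noteq> j" and Mij: "M $ i $ j = 0" and mpos: "mij > 0"
    and path: "dpath M i k"
  shows "\<not> scalable a M a (M + (\<chi> p q. if p = i \<and> q = j then mij else 0))"
proof
  define E :: "real ^ 'n ^ 'n" where "E = (\<chi> p q. if p = i \<and> q = j then mij else 0)"
  define Mb where "Mb = M + E"
  define B where "B = diagm a - M"
  define Bb where "Bb = diagm a - Mb"
  define u where "u = matrix_inv B *v vec 1"
  assume sc: "scalable a M a (M + (\<chi> p q. if p = i \<and> q = j then mij else 0))"
  then have sc': "scalable a M a Mb" by (simp add: Mb_def E_def)
  have Enn: "\<forall>p q. 0 \<le> E $ p $ q" using mpos by (simp add: E_def)
  have Mbnn: "\<forall>p q. 0 \<le> Mb $ p $ q" using Enn Mnonneg by (simp add: Mb_def add_nonneg_nonneg)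
  have Bcomp: "(B *v v) $ p = a $ p * v $ p - (M *v v) $ p" for v p
    by (simp add: B_def matrix_vector_mult_diff_rdistrib diag_mv)
  have Bbcomp: "(Bb *v v) $ p = a $ p * v $ p - (Mb *v v) $ p" for v p
    by (simp add: Bb_def matrix_vector_mult_diff_rdistrib diag_mv)
  have ZB: "\<forall>p q. p \<noteq> q \<longrightarrow> B $ p $ q \<le> 0" using Mnonneg by (simp add: B_def diagm_def)
  have ZBb: "\<forall>p q. p \<noteq> q \<longrightarrow> Bb $ p $ q \<le> 0" using Mbnn by (simp add: Bb_def diagm_def)
  have HB: "hurwitz (- B)" using rob by (simp add: robust_def B_def)
  have ndB: "\<forall>s\<ge>0. det (mat s + B) \<noteq> 0" using hurwitz_det[OF HB] by blast
  have mat0: "mat 0 + X = X" for X :: "real ^ 'n ^ 'n" by (simp add: mat_def vec_eq_iff)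
  have invB: "invertible B" using ndB[rule_format, of 0] by (simp add: mat0 invertible_det_nz)
  have Bu: "B *v u = vec 1" unfolding u_def by (rule inv_right[OF invB])
  have unn: "\<forall>p. 0 \<le> u $ p" using invpos[OF ZB ndB, of u] Bu by simp
  have Mu: "0 \<le> (M *v u) $ p" for p using nonneg_mv[OF Mnonneg unn, of p p] Mnonneg unn
    by (meson mult_nonneg_nonneg order_trans)
  have upos: "0 < u $ p" for p
  proof -
    have "a $ p * u $ p = 1 + (M *v u) $ p" using Bcomp[of u p] Bu by simp
    then have "0 < a $ p * u $ p" using Mu[of p] by simp
    then show ?thesis using apos[rule_format, of p] by (auto simp: zero_less_mult_iff)
  qed
  have uk: "u $ k = (matrix_inv (diagm a - M) *v vec 1) $ k" by (simp add: u_def B_def)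
  have ule: "u $ l \<le> u $ k" for l using kmax by (simp add: u_def B_def)
  have robM: "robust a M (u $ k)"
    unfolding robust_def
  proof (intro conjI allI impI)
    show "hurwitz (- (diagm a - M))" using rob by (simp add: robust_def)
    fix d x :: "real \<Rightarrow> real ^ 'n"
    assume H: "continuous_on {0..} d \<and> bounded (d ` {0..}) \<and> x 0 = 0 \<and>
        (\<forall>t\<ge>0. (x has_vector_derivative ((- (diagm a - M)) *v x t + d t)) (at t within {0..}))"
    define D where "D = (SUP p'. SUP s\<in>{0::real..}. \<bar>d s $ p'\<bar>)"
    have dD: "\<bar>d s $ q\<bar> \<le> D" if "0 \<le> s" for s q
      unfolding D_def using SUP_bound[of d s q] H that by blast
    have D0: "0 \<le> D" using dD[of 0] by (meson abs_ge_zero order_trans order_refl)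
    define G where "G = - B"
    have Gm: "\<forall>p q. p \<noteq> q \<longrightarrow> 0 \<le> G $ p $ q" using ZB by (simp add: G_def)
    have der: "\<forall>t\<ge>0. (x has_vector_derivative (G *v x t + d t)) (at t within {0..})"
      using H by (simp add: G_def B_def)
    have Gu: "G *v u = - vec 1" using Bu by (simp add: G_def vec_eq_iff matrix_vector_mult_def sum_negf)
    have lin: "G *v (c *s v + y) = c *s (G *v v) + G *v y" for c v y
      by (simp add: vec_eq_iff matrix_vector_mult_def sum.distrib sum_distrib_left algebra_simps)
    have lin0: "G *v (c *s v) = c *s (G *v v)" for c v
      by (simp add: vec_eq_iff matrix_vector_mult_def sum_distrib_left algebra_simps)
    have lin2: "G *v (c *s v - y) = c *s (G *v v) - G *v y" for c v y
      by (simp add: vec_eq_iff matrix_vector_mult_def sum_subtractf sum_distrib_left algebra_simps)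
    have up: "\<forall>t\<ge>0. \<forall>p. 0 \<le> (D *s u - x t) $ p"
    proof (rule comparison[OF Gm, where f = "\<lambda>t. D *s vec 1 - d t"])
      show "\<forall>t\<ge>0. ((\<lambda>t. D *s u - x t) has_vector_derivative (G *v (D *s u - x t) + (D *s vec 1 - d t))) (at t within {0..})"
      proof (intro allI impI)
        fix t :: real assume t: "0 \<le> t"
        have dv: "((\<lambda>t. D *s u - x t) has_vector_derivative (0 - (G *v x t + d t))) (at t within {0..})"
          by (rule has_vector_derivative_diff[OF has_vector_derivative_const]) (use der t in blast)
        have eq: "0 - (G *v x t + d t) = G *v (D *s u - x t) + (D *s vec 1 - d t)"
          by (simp add: lin2 lin0 Gu vec_eq_iff algebra_simps)
        show "((\<lambda>t. D *s u - x t) has_vector_derivative (G *v (D *s u - x t) + (D *s vec 1 - d t))) (at t within {0..})"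
          using dv unfolding eq .
      qed
      show "\<forall>t\<ge>0. \<forall>p. 0 \<le> (D *s vec 1 - d t) $ p" using dD by (auto simp: abs_le_iff)
      show "\<forall>p. 0 \<le> (D *s u - x 0) $ p" using H D0 unn by simp
    qed
    have lo: "\<forall>t\<ge>0. \<forall>p. 0 \<le> (D *s u + x t) $ p"
    proof (rule comparison[OF Gm, where f = "\<lambda>t. D *s vec 1 + d t"])
      show "\<forall>t\<ge>0. ((\<lambda>t. D *s u + x t) has_vector_derivative (G *v (D *s u + x t) + (D *s vec 1 + d t))) (at t within {0..})"
      proof (intro allI impI)
        fix t :: real assume t: "0 \<le> t"
        have dv: "((\<lambda>t. D *s u + x t) has_vector_derivative (0 + (G *v x t + d t))) (at t within {0..})"
          by (rule has_vector_derivative_add[OF has_vector_derivative_const]) (use der t in blast)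
        have eq: "0 + (G *v x t + d t) = G *v (D *s u + x t) + (D *s vec 1 + d t)"
          by (simp add: lin lin0 Gu vec_eq_iff algebra_simps)
        show "((\<lambda>t. D *s u + x t) has_vector_derivative (G *v (D *s u + x t) + (D *s vec 1 + d t))) (at t within {0..})"
          using dv unfolding eq .
      qed
      show "\<forall>t\<ge>0. \<forall>p. 0 \<le> (D *s vec 1 + d t) $ p"
        using dD by (auto simp: abs_le_iff) (metis add.commute le_add_same_cancel1 neg_le_iff_le add_le_cancel_left diff_ge_0_iff_ge minus_add_cancel)
      show "\<forall>p. 0 \<le> (D *s u + x 0) $ p" using H D0 unn by simp
    qed
    fix t :: real and p
    assume t: "0 \<le> t"
    have "\<bar>x t $ p\<bar> \<le> D * u $ p"
    proof -
      have "x t $ p \<le> D * u $ p" "0 \<le> D * u $ p + x t $ p" using up lo t by auto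
      then show ?thesis by (simp add: abs_le_iff)
    qed
    also have "\<dots> \<le> D * u $ k" using ule[of p] D0 by (simp add: mult_left_mono)
    finally show "\<bar>x t $ p\<bar> \<le> u $ k * D" by (simp add: mult.commute)
  qed
  have robMb: "robust a Mb (u $ k)" using sc' robM upos[of k] unfolding scalable_def by blast
  have HBb: "hurwitz (- Bb)" using robMb by (simp add: robust_def Bb_def)
  have ndBb: "\<forall>s\<ge>0. det (mat s + Bb) \<noteq> 0" using hurwitz_det[OF HBb] by blast
  have invBb: "invertible Bb" using ndBb[rule_format, of 0] by (simp add: mat0 invertible_det_nz)
  define ub where "ub = matrix_inv Bb *v vec 1"
  have Bbub: "Bb *v ub = vec 1" unfolding ub_def by (rule inv_right[OF invBb])
  have ubnn: "\<forall>p. 0 \<le> ub $ p" using invpos[OF ZBb ndBb, of ub] Bbub by simp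
  have Eu: "(E *v u) $ p = (if p = i then mij * u $ j else 0)" for p
  proof -
    have e: "\<And>q. (if p = i \<and> q = j then mij else 0) * u $ q = (if q = j then (if p = i then mij * u $ j else 0) else 0)"
      by auto
    show ?thesis unfolding E_def matrix_vector_mult_def by (simp add: e)
  qed
  have Eunn: "0 \<le> (E *v u) $ p" for p using Eu mpos upos[of j] by simp
  have Mbsplit: "(Mb *v v) $ p = (M *v v) $ p + (E *v v) $ p" for v p
    by (simp add: Mb_def matrix_vector_mult_add_rdistrib)
  define z where "z = ub - u"
  have Bbz: "(Bb *v z) $ p = (E *v u) $ p" for p
  proof -
    have "(Bb *v z) $ p = (Bb *v ub) $ p - (Bb *v u) $ p"
      by (simp add: z_def matrix_vector_mult_diff_distrib)
    also have "\<dots> = 1 - ((B *v u) $ p - (E *v u) $ p)"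
      using Bbub Bbcomp[of u p] Bcomp[of u p] Mbsplit[of u p] by simp
    also have "\<dots> = (E *v u) $ p" using Bu by simp
    finally show ?thesis .
  qed
  have znn: "\<forall>p. 0 \<le> z $ p" using invpos[OF ZBb ndBb, of z] Bbz Eunn by simp
  have zrel: "a $ p * z $ p = (E *v u) $ p + (Mb *v z) $ p" for p
    using Bbcomp[of z p] Bbz[of p] by simp
  have Mbz: "Mb $ p $ r * z $ r \<le> (Mb *v z) $ p" for p r by (rule nonneg_mv[OF Mbnn znn])
  have Mbz0: "0 \<le> (Mb *v z) $ p" for p
    using Mbz[of p p] Mbnn znn by (meson mult_nonneg_nonneg order_trans)
  have MleMb: "M $ p $ r \<le> Mb $ p $ r" for p r using Enn by (simp add: Mb_def)
  obtain xs where xs: "xs \<noteq> []" "distinct xs" "hd xs = i" "last xs = k"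
      "\<forall>l. Suc l < length xs \<longrightarrow> M $ (xs ! Suc l) $ (xs ! l) > 0"
    using path unfolding dpath_def by blast
  have zpath: "l < length xs \<longrightarrow> 0 < z $ (xs ! l)" for l
  proof (induction l)
    case 0
    show ?case
    proof
      have xi: "xs ! 0 = i" using xs(1,3) by (simp add: hd_conv_nth)
      have "0 < a $ i * z $ i" using zrel[of i] Eu[of i] mpos upos[of j] Mbz0[of i]
        by (simp add: add_pos_nonneg)
      then show "0 < z $ (xs ! 0)" using xi apos[rule_format, of i] by (auto simp: zero_less_mult_iff)
    qed
  next
    case (Suc l)
    show ?case
    proof
      assume l: "Suc l < length xs"
      define p where "p = xs ! Suc l"
      define r where "r = xs ! l"
      have zr: "0 < z $ r" using Suc l by (simp add: r_def)
      have Mpr: "0 < M $ p $ r" using xs(5) l by (simp add: p_def r_def)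
      have "0 < M $ p $ r * z $ r" using zr Mpr by simp
      also have "\<dots> \<le> Mb $ p $ r * z $ r" using MleMb[of p r] znn by (simp add: mult_right_mono)
      also have "\<dots> \<le> (Mb *v z) $ p" by (rule Mbz)
      also have "\<dots> \<le> a $ p * z $ p" using zrel[of p] Eunn[of p] by simp
      finally have "0 < a $ p * z $ p" .
      then show "0 < z $ (xs ! Suc l)" using apos[rule_format, of p] by (auto simp: zero_less_mult_iff p_def)
    qed
  qed
  have "0 < z $ k"
  proof -
    have "k = xs ! (length xs - 1)" using xs(1,4) by (simp add: last_conv_nth)
    moreover have "length xs - 1 < length xs" using xs(1) by simp
    ultimately show ?thesis using zpath by metis
  qed
  then have ubk: "u $ k < ub $ k" by (simp add: z_def)
  define \<epsilon> where "\<epsilon> = 1 / (1 + (\<Sum>p\<in>UNIV. ub $ p))"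
  have sumub: "0 \<le> (\<Sum>p\<in>UNIV. ub $ p)" using ubnn by (simp add: sum_nonneg)
  have epos: "0 < \<epsilon>" using sumub by (simp add: \<epsilon>_def)
  have ele1: "\<epsilon> \<le> 1" using sumub by (simp add: \<epsilon>_def)
  have eub: "\<epsilon> * ub $ p \<le> 1" for p
  proof -
    have "ub $ p \<le> (\<Sum>p\<in>UNIV. ub $ p)" using member_le_sum[of p UNIV "\<lambda>p. ub $ p"] ubnn by simp
    then show ?thesis using sumub by (simp add: \<epsilon>_def)
  qed
  define x where "x t = (1 - exp (- \<epsilon> * t)) *\<^sub>R ub" for t
  define d where "d t = (\<epsilon> * exp (- \<epsilon> * t)) *\<^sub>R ub + (1 - exp (- \<epsilon> * t)) *\<^sub>R (vec 1 :: real ^ 'n)" for t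
  have scl: "X *v (c *\<^sub>R v) = c *\<^sub>R (X *v v)" for X :: "real ^ 'n ^ 'n" and c v
    by (simp add: vec_eq_iff matrix_vector_mult_def sum_distrib_left algebra_simps)
  have cont: "continuous_on {0..} d" unfolding d_def by (intro continuous_intros)
  have ebnd: "0 < exp (- \<epsilon> * t)" "exp (- \<epsilon> * t) \<le> 1" if "0 \<le> t" for t
    using that epos by (auto simp: mult_nonneg_nonneg)
  have bnd: "bounded (d ` {0..})"
  proof -
    have "norm (d t) \<le> norm ub + norm (vec 1 :: real ^ 'n)" if "0 \<le> t" for t
    proof -
      have "norm (d t) \<le> \<bar>\<epsilon> * exp (- \<epsilon> * t)\<bar> * norm ub + \<bar>1 - exp (- \<epsilon> * t)\<bar> * norm (vec 1 :: real ^ 'n)"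
        unfolding d_def by (metis norm_scaleR norm_triangle_ineq)
      also have "\<dots> \<le> 1 * norm ub + 1 * norm (vec 1 :: real ^ 'n)"
      proof (intro add_mono mult_right_mono)
        show "\<bar>\<epsilon> * exp (- \<epsilon> * t)\<bar> \<le> 1" using ebnd[OF that] epos ele1
          by (simp add: abs_mult mult_le_one)
        show "\<bar>1 - exp (- \<epsilon> * t)\<bar> \<le> 1" using ebnd[OF that] by simp
      qed auto
      finally show ?thesis by simp
    qed
    then show ?thesis unfolding bounded_iff by blast
  qed
  have x0: "x 0 = 0" by (simp add: x_def)
  have der: "\<forall>t\<ge>0. (x has_vector_derivative ((- (diagm a - Mb)) *v x t + d t)) (at t within {0..})"
  proof (intro allI impI)
    fix t :: real assume t: "0 \<le> t"
    have dx: "(x has_vector_derivative (\<epsilon> * exp (- \<epsilon> * t)) *\<^sub>R ub) (at t within {0..})"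
      unfolding x_def by (auto intro!: derivative_eq_intros)
    have "(- (diagm a - Mb)) *v x t + d t = (\<epsilon> * exp (- \<epsilon> * t)) *\<^sub>R ub"
    proof -
      have "(- (diagm a - Mb)) *v x t = - ((1 - exp (- \<epsilon> * t)) *\<^sub>R (Bb *v ub))"
      proof -
        have neg: "(- X) *v v = - (X *v v)" for X :: "real ^ 'n ^ 'n" and v
          by (simp add: vec_eq_iff matrix_vector_mult_def sum_negf)
        show ?thesis unfolding Bb_def[symmetric] neg x_def scl by simp
      qed
      then show ?thesis using Bbub by (simp add: d_def)
    qed
    then show "(x has_vector_derivative ((- (diagm a - Mb)) *v x t + d t)) (at t within {0..})"
      using dx by simp
  qed
  have dcomp: "d s $ p = \<epsilon> * exp (- \<epsilon> * s) * ub $ p + (1 - exp (- \<epsilon> * s))" for s p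
    by (simp add: d_def)
  have SUP1: "(SUP p'. SUP s\<in>{0::real..}. \<bar>d s $ p'\<bar>) \<le> 1"
  proof (intro cSUP_least)
    fix p s :: real
    show "UNIV \<noteq> {}" by simp
    show "{0::real..} \<noteq> {}" by auto
  next
    fix p and s :: real assume "s \<in> {0..}"
    then have s: "0 \<le> s" by simp
    have e1: "0 < exp (- \<epsilon> * s)" "exp (- \<epsilon> * s) \<le> 1" using ebnd[OF s] by auto
    have a1: "0 \<le> \<epsilon> * ub $ p" using epos ubnn by simp
    have "exp (- \<epsilon> * s) * (\<epsilon> * ub $ p) \<le> exp (- \<epsilon> * s) * 1"
      using eub[of p] e1 by (intro mult_left_mono) auto
    moreover have "0 \<le> exp (- \<epsilon> * s) * (\<epsilon> * ub $ p)" using e1 a1 by simp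
    moreover have "d s $ p = exp (- \<epsilon> * s) * (\<epsilon> * ub $ p) + (1 - exp (- \<epsilon> * s))"
      unfolding dcomp by (simp add: algebra_simps)
    ultimately have "d s $ p \<le> 1" "0 \<le> d s $ p" using e1 by linarith+
    then show "\<bar>d s $ p\<bar> \<le> 1" by simp
  qed
  have ineq: "\<bar>x t $ k\<bar> \<le> u $ k * (SUP p'. SUP s\<in>{0::real..}. \<bar>d s $ p'\<bar>)" if "0 \<le> t" for t
    using robMb cont bnd x0 der that unfolding robust_def by blast
  define \<rho> where "\<rho> = (ub $ k - u $ k) / ub $ k"
  have ubkpos: "0 < ub $ k" using ubk upos[of k] by simp
  have rho: "0 < \<rho>" "\<rho> \<le> 1" using ubk ubkpos upos[of k] by (auto simp: \<rho>_def)
  define t where "t = - ln \<rho> / \<epsilon> + 1"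
  have "ln \<rho> \<le> 0" using rho by simp
  then have t0: "0 \<le> t" using epos by (simp add: t_def divide_nonpos_pos add_nonneg_nonneg)
  have "- \<epsilon> * t = ln \<rho> + (- \<epsilon>)" using epos by (simp add: t_def field_simps)
  then have "exp (- \<epsilon> * t) = \<rho> * exp (- \<epsilon>)"
    using rho by (simp add: exp_diff exp_minus divide_inverse)
  then have elt: "exp (- \<epsilon> * t) < \<rho>" using rho epos by simp
  have "u $ k < (1 - exp (- \<epsilon> * t)) * ub $ k"
  proof -
    have "(1 - \<rho>) * ub $ k = u $ k" using ubkpos by (simp add: \<rho>_def field_simps)
    moreover have "(1 - \<rho>) * ub $ k < (1 - exp (- \<epsilon> * t)) * ub $ k"
      using elt ubkpos by (intro mult_strict_right_mono) auto
    ultimately show ?thesis by simp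
  qed
  also have "\<dots> \<le> \<bar>x t $ k\<bar>" by (simp add: x_def)
  also have "\<dots> \<le> u $ k * (SUP p'. SUP s\<in>{0::real..}. \<bar>d s $ p'\<bar>)" by (rule ineq[OF t0])
  also have "\<dots> \<le> u $ k * 1" using SUP1 upos[of k] by (intro mult_left_mono) auto
  finally show False by simp
qed

end
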